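(* Let $a<b$, $c<d$, and let $f:[a,b]\times[c,d]\to\mathbb{R}_+$ be a nonnegative function that is convex on the coordinates. Let $n\in\mathbb{N}$ and set $x_k=a+k\frac{b-a}{n}$ and $y_k=c+k\frac{d-c}{n}$ for $k=0,1,\dots,n$. Then \begin{align*} \int_a^b\int_c^d f(x, y)\,dx\,dy &\leq \frac{b-a}{4n}\Big[(n+1)\int_c^d f(a,y)\,dy+(n+1)\int_c^d f(b,y)\,dy+2\sum_{k=1}^{n-1} \int_c^d f(x_k,y)\,dy\Big]\\ &\quad +\frac{d-c}{4n}\Big[(n+1)\int_a^b f(x,c)\,dx+(n+1)\int_a^b f(x,d)\,dx+2\sum_{k=1}^{n-1} \int_a^b f(x,y_k)\,dx\Big]. \end{align*}
   Context: A function $f:[a,b]\times[c,d]\to\mathbb{R}$ is called convex on the coordinates if for every $y\in[c,d]$ the partial map $u\mapsto f(u,y)$ is convex on $[a,b]$, and for every $x\in[a,b]$ the partial map $v\mapsto f(x,v)$ is convex on $[c,d]$. Empty sums are zero. *)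

theory Defs
  imports "HOL-Analysis.Analysis"
begin

definition convex_on_coordinates ::
  "real \<Rightarrow> real \<Rightarrow> real \<Rightarrow> real \<Rightarrow> (real \<Rightarrow> real \<Rightarrow> real) \<Rightarrow> bool" where
  "convex_on_coordinates a b c d f \<longleftrightarrow>
     (\<forall>y\<in>{c..d}. convex_on {a..b} (\<lambda>u. f u y)) \<and>
     (\<forall>x\<in>{a..b}. convex_on {c..d} (\<lambda>v. f x v))"

end

theory Submission
  imports Defs
begin

lemma conv_interp:
  fixes g :: "real \<Rightarrow> real"
  assumes "convex_on S g" "p \<in> S" "q \<in> S" "p < q" "t \<in> {p..q}"
  shows "g t \<le> ((q - t) * g p + (t - p) * g q) / (q - p)"
proof -
  define u where "u = (t - p) / (q - p)"
  have u0: "0 \<le> u" "u \<le> 1" using assms(4,5) by (auto simp: u_def field_simps)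
  have uq: "u * (q - p) = t - p" using assms(4) by (simp add: u_def)
  have tu: "(1 - u) *\<^sub>R p + u *\<^sub>R q = t"
  proof -
    have "(1 - u) *\<^sub>R p + u *\<^sub>R q = p + u * (q - p)" by (simp add: algebra_simps)
    then show ?thesis using uq by simp
  qed
  have "g ((1 - u) *\<^sub>R p + u *\<^sub>R q) \<le> (1 - u) * g p + u * g q"
    using convex_onD[OF assms(1) u0 assms(2,3)] by simp
  also have "\<dots> = ((q - t) * g p + (t - p) * g q) / (q - p)"
  proof -
    have "1 - u = (q-t)/(q-p)" using assms(4) by (simp add: u_def field_simps)
    then show ?thesis by (simp add: u_def add_divide_distrib)
  qed
  finally show ?thesis using tu by simp
qed

lemma conv_le_max:
  fixes g :: "real \<Rightarrow> real"
  assumes "convex_on {p..q} g" "p \<le> q" "t \<in> {p..q}"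
  shows "g t \<le> max (g p) (g q)"
proof (cases "p = q")
  case True then show ?thesis using assms by auto
next
  case False
  let ?M = "max (g p) (g q)"
  have "g t \<le> ((q - t) * g p + (t - p) * g q) / (q - p)"
    using conv_interp[OF assms(1) _ _ _ assms(3)] assms False by auto
  also have "\<dots> \<le> ((q - t) * ?M + (t - p) * ?M) / (q - p)"
    using assms False by (intro divide_right_mono add_mono mult_left_mono) auto
  also have "\<dots> = ?M" using assms False by (simp add: field_simps)
  finally show ?thesis .
qed

lemma conv_integrable:
  fixes g :: "real \<Rightarrow> real"
  assumes "convex_on {p..q} g" "\<forall>t\<in>{p..q}. 0 \<le> g t"
  shows "g integrable_on {p..q}"
proof (cases "p < q")
  case False
  then show ?thesis
    using integrable_on_null[of p q g] False by (simp add: content_real_eq_0)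
next
  case True
  let ?M = "max (g p) (g q)"
  have cont: "continuous_on {p<..<q} g"
    by (rule convex_on_continuous) (auto intro: convex_on_subset[OF assms(1)])
  have meas: "g \<in> borel_measurable (lebesgue_on {p<..<q})"
    by (rule continuous_imp_measurable_on_sets_lebesgue[OF cont]) auto
  have ci: "(\<lambda>x. ?M) integrable_on {p<..<q}"
    using integrable_on_Icc_iff_Ioo integrable_const_ivl by blast
  have "g integrable_on {p<..<q}"
    by (rule measurable_bounded_by_integrable_imp_integrable[OF meas ci])
       (use assms conv_le_max True in \<open>auto\<close>)
  then show ?thesis using integrable_on_Icc_iff_Ioo by blast
qed

lemma trap_seg:
  fixes g :: "real \<Rightarrow> real"
  assumes pq: "p < q" and gi: "g integrable_on {p..q}"
    and le: "\<forall>t\<in>{p..q}. g t \<le> ((q - t) * g p + (t - p) * g q) / (q - p)"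
  shows "integral {p..q} g \<le> (q - p) * (g p + g q) / 2"
proof -
  define A where "A = g p"
  define B where "B = g q"
  define \<Phi> where "\<Phi> t = ((q*t - t^2/2)*A + (t^2/2 - p*t)*B)/(q-p)" for t :: real
  define L where "L t = ((q - t) * A + (t - p) * B) / (q - p)" for t :: real
  have der: "(\<Phi> has_real_derivative L t) (at t within {p..q})" for t
  proof -
    have "((\<lambda>t. (q*t - t^2/2)*A + (t^2/2 - p*t)*B) has_real_derivative ((q - t)*A + (t - p)*B))
           (at t within {p..q})"
      by (auto intro!: derivative_eq_intros simp: algebra_simps)
    from DERIV_cdivide[OF this, of "q - p"] show ?thesis
      unfolding \<Phi>_def L_def by simp
  qed
  have hi: "(L has_integral (\<Phi> q - \<Phi> p)) {p..q}"
    by (rule fundamental_theorem_of_calculus)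
       (use pq der in \<open>auto simp: has_real_derivative_iff_has_vector_derivative[symmetric]\<close>)
  have "integral {p..q} g \<le> integral {p..q} L"
    by (rule integral_le[OF gi]) (use hi le in \<open>auto simp: L_def A_def B_def\<close>)
  also have "\<dots> = \<Phi> q - \<Phi> p" using hi by (rule integral_unique)
  also have "\<dots> = (q - p) * (g p + g q) / 2"
  proof -
    have e1: "\<Phi> q - \<Phi> p = (((q*q - q^2/2)*A + (q^2/2 - p*q)*B) - ((q*p - p^2/2)*A + (p^2/2 - p*p)*B)) / (q - p)"
      unfolding \<Phi>_def by (simp add: diff_divide_distrib)
    have e2: "((q*q - q^2/2)*A + (q^2/2 - p*q)*B) - ((q*p - p^2/2)*A + (p^2/2 - p*p)*B) = (q - p) * ((q - p) * (A + B) / 2)"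
      by (simp add: algebra_simps power2_eq_square)
    have "\<Phi> q - \<Phi> p = (q - p) * ((q - p) * (A + B) / 2) / (q - p)"
      by (subst e1, subst e2) (rule refl)
    moreover have X: "(q - p) * Y / (q - p) = Y" for Y using pq by simp
    ultimately show ?thesis unfolding A_def B_def by (simp only: X)
  qed
  finally show ?thesis .
qed

lemma trap_multi:
  fixes g :: "real \<Rightarrow> real" and h :: real and n :: nat
  assumes h: "h > 0" and n1: "n \<ge> 1" and gi: "g integrable_on {a..a + real n * h}"
   and le: "\<forall>k<n. \<forall>t\<in>{a + real k*h .. a + real (Suc k) * h}.
      g t \<le> ((a + real (Suc k)*h - t) * g (a + real k * h) + (t - (a + real k*h)) * g (a + real (Suc k)*h)) / h"
  shows "integral {a..a + real n * h} g \<le> h * ((g a + g (a + real n * h))/2 + (\<Sum>k=1..n-1. g (a + real k * h)))"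
proof -
  have seg: "integral {a + real k*h .. a + real (Suc k) * h} g \<le> h * (g (a + real k*h) + g (a + real (Suc k) * h)) / 2"
    if "k < n" for k
  proof -
    have sub: "{a + real k*h .. a + real (Suc k) * h} \<subseteq> {a..a + real n * h}"
    proof -
      have "real (Suc k) * h \<le> real n * h" using that h by (intro mult_right_mono) auto
      then show ?thesis using h by (auto simp: algebra_simps)
    qed
    have "integral {a + real k*h .. a + real (Suc k) * h} g \<le> ((a + real (Suc k) * h) - (a + real k*h)) * (g (a + real k*h) + g (a + real (Suc k) * h)) / 2"
      by (rule trap_seg) (use h le that integrable_on_subinterval[OF gi sub] in \<open>auto simp: algebra_simps\<close>)
    then show ?thesis by (simp add: algebra_simps)
  qed
  have main: "1 \<le> m \<Longrightarrow> m \<le> n \<Longrightarrow> integral {a..a + real m * h} g \<le> h * ((g a + g (a + real m * h))/2 + (\<Sum>k=1..m-1. g (a + real k * h)))" for m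
  proof (induction m)
    case 0 then show ?case by simp
  next
    case (Suc m)
    show ?case
    proof (cases "m = 0")
      case True
      then show ?thesis using seg[of 0] Suc.prems by simp
    next
      case False
      then obtain m' where m': "m = Suc m'" by (cases m) auto
      have IH: "integral {a..a + real m * h} g \<le> h * ((g a + g (a + real m * h))/2 + (\<Sum>k=1..m-1. g (a + real k * h)))"
        using Suc False by auto
      have sub: "{a..a + real (Suc m) * h} \<subseteq> {a..a + real n * h}"
        using Suc.prems h by (auto intro: order_trans mult_right_mono)
      have "integral {a..a + real (Suc m) * h} g = integral {a..a + real m * h} g + integral {a + real m * h..a + real (Suc m) * h} g"
        by (rule Henstock_Kurzweil_Integration.integral_combine[symmetric])
           (use h integrable_on_subinterval[OF gi sub] in auto)
      also have "\<dots> \<le> h * ((g a + g (a + real m * h))/2 + (\<Sum>k=1..m-1. g (a + real k * h)))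
                   + h * (g (a + real m*h) + g (a + real (Suc m) * h)) / 2"
        using IH seg[of m] Suc.prems by linarith
      also have "\<dots> = h * ((g a + g (a + real (Suc m) * h))/2 + (\<Sum>k=1..Suc m-1. g (a + real k * h)))"
        unfolding m' by (simp add: algebra_simps add_divide_distrib)
      finally show ?thesis .
    qed
  qed
  show ?thesis using main[OF n1 order_refl] .
qed

definition hat :: "real \<Rightarrow> real \<Rightarrow> real \<Rightarrow> real" where
  "hat h p t = max 0 (1 - \<bar>t - p\<bar> / h)"

lemma hat_zero: "h > 0 \<Longrightarrow> \<bar>t - p\<bar> \<ge> h \<Longrightarrow> hat h p t = 0"
  unfolding hat_def by (auto simp: field_simps)

lemma hat_in: "h > 0 \<Longrightarrow> \<bar>t - p\<bar> \<le> h \<Longrightarrow> hat h p t = (h - \<bar>t - p\<bar>) / h"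
  unfolding hat_def by (auto simp: field_simps)

lemma hat_sum:
  fixes v :: "nat \<Rightarrow> real"
  assumes h: "h > 0" and j: "j < n" and t: "t \<in> {a + real j*h .. a + real (Suc j)*h}"
  shows "(\<Sum>k\<in>{0..n}. hat h (a + real k * h) t * v k)
       = ((a + real (Suc j)*h - t) * v j + (t - (a + real j*h)) * v (Suc j)) / h"
proof -
  have zero: "hat h (a + real k * h) t * v k = 0" if k: "k \<in> {0..n} - {j, Suc j}" for k
  proof (cases "k < j")
    case True
    then have "real k + 1 \<le> real j" by linarith
    then have "real k * h + h \<le> real j * h" using h
      by (metis distrib_right mult_1 mult_right_mono less_le)
    then have "\<bar>t - (a + real k * h)\<bar> \<ge> h" using t by auto
    then show ?thesis using hat_zero h by simp
  next
    case False
    with k have "real k \<ge> real j + 2" by auto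
    then have "real k * h \<ge> real j * h + 2 * h" using h
      by (metis distrib_right mult_right_mono less_le)
    then have "\<bar>t - (a + real k * h)\<bar> \<ge> h" using t by (auto simp: algebra_simps)
    then show ?thesis using hat_zero h by simp
  qed
  have "(\<Sum>k\<in>{0..n}. hat h (a + real k * h) t * v k) = (\<Sum>k\<in>{j, Suc j}. hat h (a + real k * h) t * v k)"
    by (rule sum.mono_neutral_right) (use j zero in auto)
  also have "\<dots> = hat h (a + real j * h) t * v j + hat h (a + real (Suc j) * h) t * v (Suc j)"
    by simp
  also have "hat h (a + real j * h) t = (a + real (Suc j)*h - t) / h"
    using t h by (subst hat_in) (auto simp: algebra_simps)
  also have "hat h (a + real (Suc j) * h) t = (t - (a + real j*h)) / h"
    using t h by (subst hat_in) (auto simp: algebra_simps)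
  finally show ?thesis by (simp add: add_divide_distrib)
qed

lemma split_y:
  fixes P :: "real \<times> real \<Rightarrow> real"
  assumes "c \<le> e" "e \<le> d" "a \<le> b" and Pi: "P integrable_on cbox (a, c) (b, d)"
  shows "integral (cbox (a, c) (b, d)) P = integral (cbox (a, c) (b, e)) P + integral (cbox (a, e) (b, d)) P"
proof -
  have U: "cbox (a, c) (b, d) = cbox (a, c) (b, e) \<union> cbox (a, e) (b, d)"
    using assms by (auto simp: cbox_Pair_eq)
  have neg: "negligible (cbox (a, c) (b, e) \<inter> cbox (a, e) (b, d))"
  proof (rule negligible_subset)
    show "negligible (cbox (a, e) (b, e))" by (simp add: negligible_interval box_eq_empty Basis_prod_def)
    show "cbox (a, c) (b, e) \<inter> cbox (a, e) (b, d) \<subseteq> cbox (a, e) (b, e)"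
      by (auto simp: cbox_Pair_eq)
  qed
  have i1: "P integrable_on cbox (a, c) (b, e)"
    by (rule integrable_on_subcbox[OF Pi]) (use assms in \<open>auto simp: cbox_Pair_eq\<close>)
  have i2: "P integrable_on cbox (a, e) (b, d)"
    by (rule integrable_on_subcbox[OF Pi]) (use assms in \<open>auto simp: cbox_Pair_eq\<close>)
  show ?thesis unfolding U using integral_Un[OF i1 i2 neg] by simp
qed

lemma strip_bound:
  fixes P :: "real \<times> real \<Rightarrow> real"
  assumes "p \<le> q" "a \<le> b" and Pi: "P integrable_on cbox (a, p) (b, q)"
    and bd: "\<forall>z\<in>cbox (a, p) (b, q). P z \<le> M"
  shows "integral (cbox (a, p) (b, q)) P \<le> M * (b - a) * (q - p)"
proof -
  have "integral (cbox (a, p) (b, q)) P \<le> integral (cbox (a, p) (b, q)) (\<lambda>_. M)"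
    by (rule integral_le[OF Pi]) (use bd in auto)
  also have "\<dots> = M * (b - a) * (q - p)"
    using assms by (simp add: content_Pair)
  finally show ?thesis .
qed

lemma seg_exists:
  fixes h :: real
  assumes "h > 0" "n \<ge> 1" "x \<in> {a..a + real n * h}"
  shows "\<exists>j<n. x \<in> {a + real j * h .. a + real (Suc j) * h}"
  using assms(2,3)
proof (induction n)
  case 0 then show ?case by simp
next
  case (Suc n)
  show ?case
  proof (cases "n \<ge> 1 \<and> x \<le> a + real n * h")
    case True
    then obtain j where "j < n" "x \<in> {a + real j * h .. a + real (Suc j) * h}"
      using Suc by auto
    then show ?thesis by (intro exI[of _ j]) auto
  next
    case False
    then have "x \<in> {a + real n * h .. a + real (Suc n) * h}"
      using Suc.prems by (cases "n = 0") auto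
    then show ?thesis by (intro exI[of _ n]) auto
  qed
qed

lemma one_dir:
  fixes a b c d :: real and f :: "real \<Rightarrow> real \<Rightarrow> real" and n :: nat
  assumes ab: "a < b" and cd: "c < d" and nn: "\<forall>x\<in>{a..b}. \<forall>y\<in>{c..d}. 0 \<le> f x y"
    and cx: "\<forall>y\<in>{c..d}. convex_on {a..b} (\<lambda>u. f u y)"
    and cy: "\<forall>x\<in>{a..b}. convex_on {c..d} (\<lambda>v. f x v)"
    and n1: "n \<ge> 1"
  shows "integral (cbox (a, c) (b, d)) (\<lambda>(x, y). f x y)
     \<le> (b - a) / n * ((integral {c..d} (\<lambda>y. f a y) + integral {c..d} (\<lambda>y. f b y)) / 2
          + (\<Sum>k = 1..n - 1. integral {c..d} (\<lambda>y. f (a + k * (b - a) / n) y)))"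
proof -
  define h where "h = (b - a) / n"
  define X where "X k = a + real k * h" for k
  have h0: "h > 0" using ab n1 by (simp add: h_def)
  have X0: "X 0 = a" by (simp add: X_def)
  have Xn: "X n = b" using n1 by (simp add: X_def h_def)
  have Xeq: "a + real k * (b - a) / real n = X k" for k by (simp add: X_def h_def)
  have bn: "a + real n * h = b" using Xn by (simp add: X_def)
  have Xin: "X k \<in> {a..b}" if "k \<le> n" for k
  proof -
    have "real k * h \<le> real n * h" using that h0 by (intro mult_right_mono) auto
    then show ?thesis using h0 bn by (auto simp: X_def)
  qed
  define I where "I k = integral {c..d} (\<lambda>y. f (X k) y)" for k
  have Fint: "(\<lambda>y. f x y) integrable_on {c..d}" if "x \<in> {a..b}" for x
    using conv_integrable[of c d "\<lambda>y. f x y"] cy nn that by auto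
  have Inn: "0 \<le> integral {c..d} (\<lambda>y. f x y)" if "x \<in> {a..b}" for x
    using integral_nonneg[OF Fint[OF that]] nn that by auto
  define R where "R = h * ((integral {c..d} (\<lambda>y. f a y) + integral {c..d} (\<lambda>y. f b y)) / 2
          + (\<Sum>k = 1..n - 1. I k))"
  have R0: "0 \<le> R"
    unfolding R_def I_def using h0 ab Xin
    by (intro mult_nonneg_nonneg add_nonneg_nonneg divide_nonneg_nonneg sum_nonneg Inn) auto
  have goal: "integral (cbox (a, c) (b, d)) (\<lambda>(x, y). f x y) \<le> R"
  proof (cases "(\<lambda>(x, y). f x y) integrable_on cbox (a, c) (b, d)")
    case False
    then show ?thesis using R0 by (simp add: not_integrable_integral)
  next
    case True
    define P where "P = (\<lambda>(x::real, y::real). f x y)"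
    have Pi: "P integrable_on cbox (a, c) (b, d)" using True by (simp add: P_def)
    define M where "M = max (max (f a c) (f a d)) (max (f b c) (f b d))"
    have fM: "f x y \<le> M" if xy: "x \<in> {a..b}" "y \<in> {c..d}" for x y
    proof -
      have "f x y \<le> max (f a y) (f b y)" using conv_le_max[of a b "\<lambda>u. f u y" x] cx xy ab by auto
      moreover have "f a y \<le> max (f a c) (f a d)" using conv_le_max[of c d "\<lambda>v. f a v" y] cy xy cd ab by auto
      moreover have "f b y \<le> max (f b c) (f b d)" using conv_le_max[of c d "\<lambda>v. f b v" y] cy xy cd ab by auto
      ultimately show ?thesis unfolding M_def by (auto simp: max_def split: if_splits)
    qed
    have M0: "0 \<le> M" using nn[rule_format, of a c] ab cd fM[of a c] by auto
    have key: "integral (cbox (a, c) (b, d)) P \<le> R + 2 * M * (b - a) * \<epsilon>"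
      if e: "0 < \<epsilon>" "\<epsilon> < (d - c) / 2" for \<epsilon>
    proof -
      define c' where "c' = c + \<epsilon>"
      define d' where "d' = d - \<epsilon>"
      have cc: "c < c'" "c' < d'" "d' < d" using e by (auto simp: c'_def d'_def)
      have Psub: "P integrable_on cbox (a, p) (b, q)" if "c \<le> p" "q \<le> d" for p q
        by (rule integrable_on_subcbox[OF Pi]) (use that in \<open>auto simp: cbox_Pair_eq\<close>)
      have PM: "\<forall>z\<in>cbox (a, p) (b, q). P z \<le> M" if "c \<le> p" "q \<le> d" for p q
        using that fM by (auto simp: cbox_Pair_eq P_def)
      have sp1: "integral (cbox (a, c) (b, d)) P = integral (cbox (a, c) (b, c')) P + integral (cbox (a, c') (b, d)) P"
        by (rule split_y) (use cc ab Pi in auto)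
      have sp2: "integral (cbox (a, c') (b, d)) P = integral (cbox (a, c') (b, d')) P + integral (cbox (a, d') (b, d)) P"
        by (rule split_y) (use cc ab Psub[of c' d] in auto)
      have st1: "integral (cbox (a, c) (b, c')) P \<le> M * (b - a) * (c' - c)"
        by (rule strip_bound) (use cc ab Psub[of c c'] PM[of c c'] in auto)
      have st2: "integral (cbox (a, d') (b, d)) P \<le> M * (b - a) * (d - d')"
        by (rule strip_bound) (use cc ab Psub[of d' d] PM[of d' d] in auto)
      have mid: "integral (cbox (a, c') (b, d')) P \<le> R"
      proof -
        define G where "G x y = (\<Sum>k\<in>{0..n}. hat h (X k) x * f (X k) y)" for x y
        have Fcont: "continuous_on {c'..d'} (\<lambda>y. f (X k) y)" if "k \<le> n" for k
        proof -
          have "continuous_on {c<..<d} (\<lambda>y. f (X k) y)"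
            by (rule convex_on_continuous)
               (use convex_on_subset[OF cy[rule_format, OF Xin[OF that]], of "{c<..<d}"] in \<open>auto simp: subset_eq\<close>)
          then show ?thesis by (rule continuous_on_subset) (use cc in auto)
        qed
        have hatc: "continuous_on S (hat h p)" for S p
          unfolding hat_def[abs_def] by (intro continuous_intros) (use h0 in auto)
        have Gc: "continuous_on (cbox (a, c') (b, d')) (\<lambda>(x, y). G x y)"
        proof -
          have "continuous_on (cbox (a, c') (b, d'))
                 (\<lambda>z. \<Sum>k\<in>{0..n}. hat h (X k) (fst z) * f (X k) (snd z))"
            by (intro continuous_on_sum continuous_on_mult ballI
                  continuous_on_compose2[OF hatc continuous_on_fst]
                  continuous_on_compose2[OF Fcont continuous_on_snd])
               (auto simp: cbox_Pair_eq)
          then show ?thesis by (simp add: G_def case_prod_beta)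
        qed
        have Gc': "continuous_on ({c'..d'} \<times> cbox a b) (\<lambda>(y, x). G x y)"
        proof -
          have "continuous_on ({c'..d'} \<times> cbox a b)
                 (\<lambda>z. \<Sum>k\<in>{0..n}. hat h (X k) (snd z) * f (X k) (fst z))"
            by (intro continuous_on_sum continuous_on_mult ballI
                  continuous_on_compose2[OF hatc continuous_on_snd]
                  continuous_on_compose2[OF Fcont continuous_on_fst])
               auto
          then show ?thesis by (simp add: G_def case_prod_beta)
        qed
        have PG: "\<forall>z\<in>cbox (a, c') (b, d'). P z \<le> (\<lambda>(x, y). G x y) z"
        proof (intro ballI)
          fix z assume z: "z \<in> cbox (a, c') (b, d')"
          obtain x y where zxy: "z = (x, y)" by (cases z)
          from z have x: "x \<in> {a..b}" and y: "y \<in> {c..d}" using cc zxy by (auto simp: cbox_Pair_eq)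
          obtain j where j: "j < n" "x \<in> {a + real j * h .. a + real (Suc j) * h}"
            using seg_exists[OF h0 n1, of x a] x bn by auto
          have XS: "X (Suc j) - X j = h" by (simp add: X_def algebra_simps)
          have "f x y \<le> ((X (Suc j) - x) * f (X j) y + (x - X j) * f (X (Suc j)) y) / (X (Suc j) - X j)"
            by (rule conv_interp[OF cx[rule_format, OF y]])
               (use j Xin[of j] Xin[of "Suc j"] h0 XS in \<open>auto simp: X_def\<close>)
          also have "\<dots> = G x y"
            unfolding G_def XS using hat_sum[OF h0 j(1) j(2), of "\<lambda>k. f (X k) y"]
            by (simp add: X_def)
          finally have "f x y \<le> G x y" .
          then show "P z \<le> (\<lambda>(x, y). G x y) z" by (simp add: P_def zxy)
        qed
        have "integral (cbox (a, c') (b, d')) P \<le> integral (cbox (a, c') (b, d')) (\<lambda>(x, y). G x y)"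
          by (rule integral_le[OF Psub[of c' d'] integrable_continuous[OF Gc]]) (use cc PG in auto)
        also have "\<dots> = integral (cbox a b) (\<lambda>x. integral (cbox c' d') (\<lambda>y. G x y))"
          using integral_prod_continuous[OF Gc] by simp
        also have "\<dots> = integral (cbox c' d') (\<lambda>y. integral (cbox a b) (\<lambda>x. G x y))"
          using integral_swap_continuous[OF Gc] by simp
        also have "\<dots> \<le> R"
        proof -
          define J where "J x = integral {c'..d'} (\<lambda>y. f x y)" for x
          define S where "S y = h * ((f a y + f b y) / 2 + (\<Sum>k = 1..n - 1. f (X k) y))" for y
          have gnode: "G (X k) y = f (X k) y" if "k \<le> n" for k y
          proof (cases "k < n")
            case True
            have "G (X k) y = ((a + real (Suc k)*h - X k) * f (X k) y + (X k - (a + real k*h)) * f (X (Suc k)) y) / h"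
              unfolding G_def using hat_sum[OF h0 True, of "X k" a "\<lambda>k. f (X k) y"] h0
              by (simp add: X_def algebra_simps)
            then show ?thesis using h0 by (simp add: X_def algebra_simps)
          next
            case False
            then have kn: "k = n" using that by simp
            have j: "n - 1 < n" "Suc (n - 1) = n" using n1 by auto
            have xin: "X n \<in> {a + real (n - 1) * h .. a + real (Suc (n - 1)) * h}"
              using j h0 by (simp add: X_def)
            have "G (X n) y = ((a + real (Suc (n - 1))*h - X n) * f (X (n - 1)) y + (X n - (a + real (n - 1)*h)) * f (X (Suc (n - 1))) y) / h"
              unfolding G_def using hat_sum[OF h0 j(1) xin, of "\<lambda>k. f (X k) y"]
              by (simp add: X_def)
            also have "\<dots> = f (X n) y" unfolding j(2) using h0 j
              by (simp add: X_def algebra_simps of_nat_diff)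
            finally show ?thesis using kn by simp
          qed
          have inner: "integral (cbox a b) (\<lambda>x. G x y) \<le> S y" if y: "y \<in> {c'..d'}" for y
          proof -
            have gcont: "continuous_on {a..b} (\<lambda>x. G x y)"
              unfolding G_def by (intro continuous_on_sum continuous_on_mult continuous_on_const hatc)
            have "integral {a..a + real n * h} (\<lambda>x. G x y)
               \<le> h * ((G a y + G (a + real n * h) y)/2 + (\<Sum>k=1..n-1. G (a + real k * h) y))"
            proof (rule trap_multi[OF h0 n1])
              show "(\<lambda>x. G x y) integrable_on {a..a + real n * h}"
                using integrable_continuous_interval[OF gcont] bn by simp
              show "\<forall>k<n. \<forall>t\<in>{a + real k*h .. a + real (Suc k) * h}.
                 G t y \<le> ((a + real (Suc k)*h - t) * G (a + real k * h) y + (t - (a + real k*h)) * G (a + real (Suc k)*h) y) / h"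
              proof (intro allI impI ballI)
                fix k t assume k: "k < n" and t: "t \<in> {a + real k*h .. a + real (Suc k) * h}"
                have "G t y = ((a + real (Suc k)*h - t) * f (X k) y + (t - (a + real k*h)) * f (X (Suc k)) y) / h"
                  unfolding G_def using hat_sum[OF h0 k t, of "\<lambda>k. f (X k) y"] by (simp add: X_def)
                also have "\<dots> = ((a + real (Suc k)*h - t) * G (a + real k * h) y + (t - (a + real k*h)) * G (a + real (Suc k)*h) y) / h"
                  using gnode[of k y] gnode[of "Suc k" y] k by (simp add: X_def)
                finally show "G t y \<le> ((a + real (Suc k)*h - t) * G (a + real k * h) y + (t - (a + real k*h)) * G (a + real (Suc k)*h) y) / h"
                  by simp
              qed
            qed
            also have "\<dots> = S y"
            proof -
              have "G a y = f a y" using gnode[of 0 y] X0 by simp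
              moreover have "G (a + real n * h) y = f b y" using gnode[of n y] Xn by (simp add: X_def)
              moreover have "(\<Sum>k=1..n-1. G (a + real k * h) y) = (\<Sum>k=1..n-1. f (X k) y)"
                by (rule sum.cong) (use gnode in \<open>auto simp: X_def\<close>)
              ultimately show ?thesis by (simp add: S_def)
            qed
            finally show ?thesis using bn by simp
          qed
          have fcab: "continuous_on {c'..d'} (\<lambda>y. f x y)" if "x \<in> {X k | k. k \<le> n}" for x
            using that Fcont by auto
          have fca: "continuous_on {c'..d'} (\<lambda>y. f a y)" using Fcont[of 0] X0 by simp
          have fcb: "continuous_on {c'..d'} (\<lambda>y. f b y)" using Fcont[of n] Xn by simp
          have hasJ: "((\<lambda>y. f x y) has_integral J x) {c'..d'}" if "continuous_on {c'..d'} (\<lambda>y. f x y)" for x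
            unfolding J_def using integrable_continuous_interval[OF that] by (rule integrable_integral)
          have Sint: "(S has_integral h * ((J a + J b) / 2 + (\<Sum>k = 1..n - 1. J (X k)))) {c'..d'}"
            unfolding S_def
            by (intro has_integral_mult_right has_integral_add has_integral_divide has_integral_sum
                  finite_atLeastAtMost hasJ fca fcb Fcont) auto
          have innerc: "(\<lambda>y. integral (cbox a b) (\<lambda>x. G x y)) integrable_on cbox c' d'"
          proof -
            have "continuous_on {c'..d'} (\<lambda>y. integral {a..b} (\<lambda>x. G x y))"
              using integral_continuous_on_param[OF Gc'] by simp
            then show ?thesis using integrable_continuous_interval by simp
          qed
          have "integral (cbox c' d') (\<lambda>y. integral (cbox a b) (\<lambda>x. G x y)) \<le> integral (cbox c' d') S"
            by (rule integral_le[OF innerc]) (use Sint inner in \<open>auto simp: has_integral_integrable\<close>)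
          also have "\<dots> = h * ((J a + J b) / 2 + (\<Sum>k = 1..n - 1. J (X k)))"
            using Sint by (simp add: integral_unique)
          also have "\<dots> \<le> R"
          proof -
            have JI: "J x \<le> integral {c..d} (\<lambda>y. f x y)" if "x \<in> {a..b}" for x
              unfolding J_def
              by (rule integral_subset_le)
                 (use cc that nn Fint[OF that] in \<open>auto intro: integrable_on_subinterval\<close>)
            show ?thesis unfolding R_def I_def using h0 ab Xin n1
              by (intro mult_left_mono add_mono divide_right_mono sum_mono JI) auto
          qed
          finally show ?thesis .
        qed
        finally show ?thesis .
      qed
      have "M * (b - a) * (c' - c) + M * (b - a) * (d - d') = 2 * M * (b - a) * \<epsilon>"
        by (simp add: c'_def d'_def algebra_simps)
      then show ?thesis using sp1 sp2 st1 st2 mid by linarith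
    qed
    show ?thesis
    proof (rule ccontr)
      assume "\<not> ?thesis"
      then have LR: "integral (cbox (a, c) (b, d)) P > R" by (simp add: P_def)
      define \<delta> where "\<delta> = integral (cbox (a, c) (b, d)) P - R"
      define K where "K = 2 * M * (b - a) + 1"
      have d0: "\<delta> > 0" using LR by (simp add: \<delta>_def)
      have K0: "K > 0"
      proof -
        have "0 \<le> 2 * M * (b - a)" using M0 ab by simp
        then show ?thesis by (simp add: K_def)
      qed
      define \<epsilon> where "\<epsilon> = min ((d - c) / 4) (\<delta> / (2 * K))"
      have e1: "\<epsilon> \<le> (d - c) / 4" unfolding \<epsilon>_def by (rule min.cobounded1)
      have e2: "0 < \<epsilon>" using cd d0 K0 unfolding \<epsilon>_def by simp
      have e0: "0 < \<epsilon>" "\<epsilon> < (d - c) / 2" using cd e1 e2 by linarith+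
      have "2 * M * (b - a) * \<epsilon> \<le> K * \<epsilon>" using e0 by (intro mult_right_mono) (auto simp: K_def)
      also have "K * \<epsilon> \<le> K * (\<delta> / (2 * K))" using K0 by (intro mult_left_mono) (auto simp: \<epsilon>_def)
      also have "\<dots> = \<delta> / 2" using K0 by simp
      finally have "2 * M * (b - a) * \<epsilon> \<le> \<delta> / 2" .
      with key[OF e0] d0 show False by (simp add: \<delta>_def)
    qed
  qed
  show ?thesis using goal unfolding R_def I_def h_def Xeq by simp
qed


theorem theorem6:
  fixes a b c d :: real and f :: "real \<Rightarrow> real \<Rightarrow> real" and n :: nat
  assumes "a < b" and "c < d"
    and "\<forall>x\<in>{a..b}. \<forall>y\<in>{c..d}. 0 \<le> f x y"
    and "convex_on_coordinates a b c d f"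
    and "n \<ge> 1"
  shows "integral (cbox (a, c) (b, d)) (\<lambda>(x, y). f x y)
    \<le> (b - a) / (4 * n) *
        ((n + 1) * integral {c..d} (\<lambda>y. f a y)
         + (n + 1) * integral {c..d} (\<lambda>y. f b y)
         + 2 * (\<Sum>k = 1..n - 1. integral {c..d} (\<lambda>y. f (a + k * (b - a) / n) y)))
      + (d - c) / (4 * n) *
        ((n + 1) * integral {a..b} (\<lambda>x. f x c)
         + (n + 1) * integral {a..b} (\<lambda>x. f x d)
         + 2 * (\<Sum>k = 1..n - 1. integral {a..b} (\<lambda>x. f x (c + k * (d - c) / n))))"
proof -
  have cx: "\<forall>y\<in>{c..d}. convex_on {a..b} (\<lambda>u. f u y)"
    and cy: "\<forall>x\<in>{a..b}. convex_on {c..d} (\<lambda>v. f x v)"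
    using assms(4) unfolding convex_on_coordinates_def by auto
  define L where "L = integral (cbox (a, c) (b, d)) (\<lambda>(x, y). f x y)"
  define A where "A = integral {c..d} (\<lambda>y. f a y)"
  define B where "B = integral {c..d} (\<lambda>y. f b y)"
  define C where "C = integral {a..b} (\<lambda>x. f x c)"
  define D where "D = integral {a..b} (\<lambda>x. f x d)"
  define Sx where "Sx = (\<Sum>k = 1..n - 1. integral {c..d} (\<lambda>y. f (a + k * (b - a) / n) y))"
  define Sy where "Sy = (\<Sum>k = 1..n - 1. integral {a..b} (\<lambda>x. f x (c + k * (d - c) / n)))"
  have L1: "L \<le> (b - a) / n * ((A + B) / 2 + Sx)"
    unfolding L_def A_def B_def Sx_def by (rule one_dir[OF assms(1,2,3) cx cy assms(5)])
  have L2: "L \<le> (b - a) * (A + B) / 2"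
    using one_dir[OF assms(1,2,3) cx cy, of 1] unfolding L_def A_def B_def by simp
  have intx: "0 \<le> integral {a..b} (\<lambda>x. f x y)" if "y \<in> {c..d}" for y
    using conv_integrable[of a b "\<lambda>x. f x y"] cx assms(3) that
    by (intro integral_nonneg) auto
  have C0: "0 \<le> C" unfolding C_def using intx assms(2) by simp
  have D0: "0 \<le> D" unfolding D_def using intx assms(2) by simp
  have Sy0: "0 \<le> Sy" unfolding Sy_def
  proof (intro sum_nonneg intx)
    fix k assume k: "k \<in> {1..n - 1}"
    have "real k \<le> real n" using k by auto
    then have "real k * (d - c) \<le> real n * (d - c)" using assms(2) by (intro mult_right_mono) auto
    then have "real k * (d - c) / real n \<le> d - c" using assms(5) by (simp add: divide_le_eq mult.commute)
    moreover have "0 \<le> real k * (d - c) / real n" using assms(2) by simp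
    ultimately show "c + real k * (d - c) / real n \<in> {c..d}" by auto
  qed
  have n0: "real n > 0" using assms(5) by simp
  have e1: "(b - a) / (4 * real n) * ((1 + real n) * A + (1 + real n) * B + 2 * Sx)
      = ((b - a) / n * ((A + B) / 2 + Sx)) / 2 + ((b - a) * (A + B) / 2) / 2"
    using n0 by (simp add: field_simps)
  have e2: "0 \<le> (d - c) / (4 * real n) * ((1 + real n) * C + (1 + real n) * D + 2 * Sy)"
    using n0 assms(2) C0 D0 Sy0 by (intro mult_nonneg_nonneg add_nonneg_nonneg) auto
  have "L \<le> (b - a) / (4 * real n) * ((1 + real n) * A + (1 + real n) * B + 2 * Sx)
      + (d - c) / (4 * real n) * ((1 + real n) * C + (1 + real n) * D + 2 * Sy)"
  proof -
    have aux: "\<And>L U V T W :: real. L \<le> U \<Longrightarrow> L \<le> V \<Longrightarrow> T = U / 2 + V / 2 \<Longrightarrow> 0 \<le> W \<Longrightarrow> L \<le> T + W"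
      by linarith
    show ?thesis by (rule aux[OF L1 L2 e1 e2])
  qed
  then show ?thesis unfolding L_def A_def B_def C_def D_def Sx_def Sy_def by simp
qed

end
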